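(* Let $\mathcal{A},\mathcal{B},\mathcal{C}$ be finite-dimensional complex Hilbert spaces with $\dim\mathcal{C}\geq\dim(\mathcal{A}\otimes\mathcal{B})$. Let $L$ be a subunitary operator on $\mathcal{A}\otimes\mathcal{B}$ (i.e. $\|L\ket{\varphi}\|\leq\|\ket{\varphi}\|$ for all $\ket{\varphi}$). Let $\ket{\xi}\neq 0$ and $\ket{\tau}$ be vectors in $\mathcal{A}\otimes\mathcal{B}\otimes\mathcal{C}$, and let $T\geq 1$ be an integer. Then it is possible to transform $\ket{\xi}\mapsto\ket{\tau}$ in $T$ timesteps (in the sense defined in the context) if and only if there exist positive semidefinite operators $\pi^0,\pi^1,\dots,\pi^{T-1}$ on $\mathcal{A}\otimes\mathcal{B}$ such that $\mathrm{tr}_{\mathcal{B}}\pi^{j+1}=\mathrm{tr}_{\mathcal{B}}\left(L\pi^jL^\dagger\right)$ for all $0\leq j\leq T-2$, $\mathrm{tr}_{\mathcal{B}\mathcal{C}}\ket{\xi}\bra{\xi}=\mathrm{tr}_{\mathcal{B}}\pi^0$, and $\mathrm{tr}_{\mathcal{B}\mathcal{C}}\ket{\tau}\bra{\tau}=\mathrm{tr}_{\mathcal{B}}\left(L\pi^{T-1}L^\dagger\right)$.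
   Context: A $T$-timestep algorithm consists of a choice of unitaries $U_0,U_1,\dots,U_T$ acting on $\mathcal{B}\otimes\mathcal{C}$; it applies the operator $E=(I_{\mathcal{A}}\otimes U_T)(L\otimes I_{\mathcal{C}})(I_{\mathcal{A}}\otimes U_{T-1})(L\otimes I_{\mathcal{C}})\cdots(L\otimes I_{\mathcal{C}})(I_{\mathcal{A}}\otimes U_0)$ (i.e. $L$ is applied exactly $T$ times on $\mathcal{A}\otimes\mathcal{B}$, interleaved with arbitrary unitaries on $\mathcal{B}\otimes\mathcal{C}$; the algorithm never acts directly on $\mathcal{A}$ otherwise). "Transform $\ket{\xi}\mapsto\ket{\tau}$ in $T$ timesteps" means there is such an algorithm with $E\ket{\xi}=\ket{\tau}$. States need not be normalized. $\mathrm{tr}_{\mathcal{B}}$, $\mathrm{tr}_{\mathcal{B}\mathcal{C}}$ denote partial traces over the indicated factors. *)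

theory Defs
  imports Complex_Main
begin

text \<open>Finite-dimensional Hilbert spaces A, B, C are modelled as coordinate spaces
 indexed by finite types 'a, 'b, 'c (orthonormal bases). Vectors are functions
 from the basis index to complex; operators are matrices (row index, column index).\<close>

type_synonym ('i) vec = "'i \<Rightarrow> complex"
type_synonym ('i) op = "'i \<Rightarrow> 'i \<Rightarrow> complex"

definition op_apply :: "('i::finite) op \<Rightarrow> 'i vec \<Rightarrow> 'i vec" where
  "op_apply M v = (\<lambda>i. \<Sum>j\<in>UNIV. M i j * v j)"

definition op_mult :: "('i::finite) op \<Rightarrow> 'i op \<Rightarrow> 'i op" where
  "op_mult M N = (\<lambda>i k. \<Sum>j\<in>UNIV. M i j * N j k)"

definition op_adj :: "'i op \<Rightarrow> 'i op" where
  "op_adj M = (\<lambda>i j. cnj (M j i))"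

definition op_id :: "'i op" where
  "op_id = (\<lambda>i j. if i = j then 1 else 0)"

definition vnorm :: "('i::finite) vec \<Rightarrow> real" where
  "vnorm v = sqrt (\<Sum>i\<in>UNIV. (cmod (v i))\<^sup>2)"

definition unitary_op :: "('i::finite) op \<Rightarrow> bool" where
  "unitary_op U \<longleftrightarrow> op_mult (op_adj U) U = op_id \<and> op_mult U (op_adj U) = op_id"

definition subunitary :: "('i::finite) op \<Rightarrow> bool" where
  "subunitary L \<longleftrightarrow> (\<forall>\<phi>. vnorm (op_apply L \<phi>) \<le> vnorm \<phi>)"

definition psd :: "('i::finite) op \<Rightarrow> bool" where
  "psd M \<longleftrightarrow> (\<forall>v. let q = (\<Sum>i\<in>UNIV. cnj (v i) * op_apply M v i) in Im q = 0 \<and> Re q \<ge> 0)"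

definition ptrace_B :: "('a \<times> 'b::finite) op \<Rightarrow> 'a op" where
  "ptrace_B M = (\<lambda>a a'. \<Sum>b\<in>UNIV. M (a, b) (a', b))"

definition ketbra :: "'i vec \<Rightarrow> 'i op" where
  "ketbra \<xi> = (\<lambda>i j. \<xi> i * cnj (\<xi> j))"

definition ptrace_BC :: "('a \<times> ('b::finite \<times> 'c::finite)) op \<Rightarrow> 'a op" where
  "ptrace_BC M = (\<lambda>a a'. \<Sum>bc\<in>UNIV. M (a, bc) (a', bc))"

text \<open>I_A \<otimes> U for U on B\<otimes>C, and L \<otimes> I_C for L on A\<otimes>B, acting on A\<otimes>B\<otimes>C.\<close>
definition apply_BC :: "('b::finite \<times> 'c::finite) op \<Rightarrow> ('a \<times> 'b \<times> 'c) vec \<Rightarrow> ('a \<times> 'b \<times> 'c) vec" where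
  "apply_BC U v = (\<lambda>(a, b, c). \<Sum>(b', c')\<in>UNIV. U (b, c) (b', c') * v (a, b', c'))"

definition apply_AB :: "('a::finite \<times> 'b::finite) op \<Rightarrow> ('a \<times> 'b \<times> 'c) vec \<Rightarrow> ('a \<times> 'b \<times> 'c) vec" where
  "apply_AB L v = (\<lambda>(a, b, c). \<Sum>(a', b')\<in>UNIV. L (a, b) (a', b') * v (a', b', c))"

text \<open>The operator E of a k-timestep algorithm with unitaries Us 0, ..., Us k applied to v:
  E = (I\<otimes>U_k)(L\<otimes>I)(I\<otimes>U_{k-1}) ... (L\<otimes>I)(I\<otimes>U_0).\<close>
fun run_alg :: "('a::finite \<times> 'b::finite) op \<Rightarrow> (nat \<Rightarrow> ('b \<times> 'c::finite) op) \<Rightarrow> nat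
    \<Rightarrow> ('a \<times> 'b \<times> 'c) vec \<Rightarrow> ('a \<times> 'b \<times> 'c) vec" where
  "run_alg L Us 0 v = apply_BC (Us 0) v"
| "run_alg L Us (Suc k) v = apply_BC (Us (Suc k)) (apply_AB L (run_alg L Us k v))"

definition transformable :: "('a::finite \<times> 'b::finite) op \<Rightarrow> nat
    \<Rightarrow> ('a \<times> 'b \<times> 'c::finite) vec \<Rightarrow> ('a \<times> 'b \<times> 'c) vec \<Rightarrow> bool" where
  "transformable L T \<xi> \<tau> \<longleftrightarrow>
     (\<exists>Us. (\<forall>j\<le>T. unitary_op (Us j)) \<and> run_alg L Us T \<xi> = \<tau>)"

end

theory Submission
  imports Defs
begin

definition ip :: "('i::finite) vec \<Rightarrow> 'i vec \<Rightarrow> complex" where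
  "ip u v = (\<Sum>x\<in>UNIV. u x * cnj (v x))"

definition ek :: "'i \<Rightarrow> 'i vec" where
  "ek k = (\<lambda>x. if x = k then 1 else 0)"

lemma sum_pair: "(\<Sum>x\<in>(UNIV::('a::finite\<times>'b::finite) set). f x) = (\<Sum>a\<in>UNIV. \<Sum>b\<in>UNIV. f (a,b))"
  unfolding sum.cartesian_product by simp

lemma op_apply_mult: "op_apply (op_mult A B) v = op_apply A (op_apply B v)"
  unfolding op_apply_def op_mult_def
  apply (rule ext)
  apply (simp add: sum_distrib_left sum_distrib_right mult.assoc)
  apply (subst sum.swap)
  apply simp
  done

lemma op_mult_assoc: "op_mult (op_mult A B) C = op_mult A (op_mult B C)"
  unfolding op_mult_def
  apply (rule ext)+
  apply (simp add: sum_distrib_left sum_distrib_right mult.assoc)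
  apply (subst sum.swap)
  apply simp
  done

lemma sum_delta1[simp]: "(\<Sum>j\<in>UNIV. (if i = j then 1 else 0) * f j) = (f (i::'i::finite) :: complex)"
proof -
  have *: "(\<lambda>j. (if i = j then 1 else 0) * f j) = (\<lambda>j. if i = j then f j else 0)" by auto
  show ?thesis apply (subst *) by simp
qed

lemma sum_delta2[simp]: "(\<Sum>j\<in>UNIV. f j * (if j = k then 1 else 0)) = (f (k::'i::finite) :: complex)"
proof -
  have *: "(\<lambda>j. f j * (if j = k then 1 else 0)) = (\<lambda>j. if j = k then f j else 0)" by auto
  show ?thesis apply (subst *) by simp
qed

lemma op_apply_id[simp]: "op_apply op_id v = v"
  unfolding op_apply_def op_id_def by simp

lemma op_mult_id[simp]: "op_mult op_id A = A" "op_mult A op_id = A"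
  unfolding op_mult_def op_id_def by simp_all

lemma op_adj_adj[simp]: "op_adj (op_adj A) = A"
  unfolding op_adj_def by auto

lemma op_adj_mult: "op_adj (op_mult A B) = op_mult (op_adj B) (op_adj A)"
  unfolding op_adj_def op_mult_def by (auto intro!: ext sum.cong simp: mult.commute)

lemma op_adj_id[simp]: "op_adj op_id = op_id"
  unfolding op_adj_def op_id_def by (auto intro!: ext)

lemma unitary_adj: "unitary_op U \<Longrightarrow> unitary_op (op_adj U)"
  unfolding unitary_op_def by simp

lemma unitary_mult: "unitary_op U \<Longrightarrow> unitary_op V \<Longrightarrow> unitary_op (op_mult U V)"
  unfolding unitary_op_def op_adj_mult
  by (metis op_mult_assoc op_mult_id)

lemma unitary_id: "unitary_op (op_id :: ('i::finite) op)"
  unfolding unitary_op_def by simp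

lemma swap3: "(\<Sum>x\<in>(UNIV::'x::finite set). \<Sum>y\<in>(UNIV::'y::finite set). \<Sum>z\<in>(UNIV::'z::finite set). f x y z) = (\<Sum>y\<in>UNIV. \<Sum>z\<in>UNIV. \<Sum>x\<in>UNIV. (f x y z :: complex))"
proof -
  have "(\<Sum>x\<in>(UNIV::'x set). \<Sum>y\<in>(UNIV::'y set). \<Sum>z\<in>(UNIV::'z set). f x y z) = (\<Sum>y\<in>UNIV. \<Sum>x\<in>UNIV. \<Sum>z\<in>UNIV. f x y z)"
    by (rule sum.swap)
  also have "\<dots> = (\<Sum>y\<in>UNIV. \<Sum>z\<in>UNIV. \<Sum>x\<in>UNIV. f x y z)"
    by (rule sum.cong[OF refl], rule sum.swap)
  finally show ?thesis .
qed

lemma ip_apply: assumes "op_mult (op_adj U) U = op_id"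
  shows "ip (op_apply U u) (op_apply U w) = ip u w"
proof -
  have "ip (op_apply U u) (op_apply U w) = (\<Sum>x\<in>UNIV. \<Sum>y\<in>UNIV. \<Sum>z\<in>UNIV. (U x y * u y) * cnj (U x z * w z))"
    unfolding ip_def op_apply_def cnj_sum sum_product by (rule refl)
  also have "\<dots> = (\<Sum>y\<in>UNIV. \<Sum>z\<in>UNIV. \<Sum>x\<in>UNIV. (U x y * u y) * cnj (U x z * w z))"
    by (rule swap3)
  also have "\<dots> = (\<Sum>y\<in>UNIV. \<Sum>z\<in>UNIV. u y * cnj (w z) * (\<Sum>x\<in>UNIV. cnj (U x z) * U x y))"
    by (simp add: sum_distrib_left mult_ac)
  also have "\<dots> = (\<Sum>y\<in>UNIV. \<Sum>z\<in>UNIV. u y * cnj (w z) * op_mult (op_adj U) U z y)"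
    unfolding op_mult_def op_adj_def by simp
  also have "\<dots> = (\<Sum>y\<in>UNIV. u y * cnj (w y))" unfolding assms op_id_def
    by (simp add: if_distrib cong: if_cong)
  finally show ?thesis unfolding ip_def .
qed

lemma apply_adj_apply: "unitary_op U \<Longrightarrow> op_apply (op_adj U) (op_apply U v) = v"
  by (metis op_apply_id op_apply_mult unitary_op_def)

definition supp_in :: "'i set \<Rightarrow> 'i vec \<Rightarrow> bool" where
  "supp_in S v \<longleftrightarrow> (\<forall>x. x \<notin> S \<longrightarrow> v x = 0)"

definition fixes_out :: "'i set \<Rightarrow> 'i op \<Rightarrow> bool" where
  "fixes_out S U \<longleftrightarrow> (\<forall>x y. x \<notin> S \<or> y \<notin> S \<longrightarrow> U x y = op_id x y)"

lemma fixes_out_id: "fixes_out S op_id"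
  unfolding fixes_out_def by simp

lemma fixes_out_adj: "fixes_out S U \<Longrightarrow> fixes_out S (op_adj U)"
  unfolding fixes_out_def op_adj_def op_id_def by auto

lemma fixes_out_mono: "fixes_out S U \<Longrightarrow> S \<subseteq> S' \<Longrightarrow> fixes_out S' U"
  unfolding fixes_out_def by auto

lemma fixes_out_mult: assumes "fixes_out S (U::('i::finite) op)" "fixes_out S V"
  shows "fixes_out S (op_mult U V)"
  unfolding fixes_out_def
proof (intro allI impI)
  fix x y assume xy: "x \<notin> S \<or> y \<notin> S"
  show "op_mult U V x y = op_id x y"
  proof (cases "x \<notin> S")
    case True
    then have *: "\<And>j. U x j = op_id x j" using assms(1) unfolding fixes_out_def by auto
    have "V x y = op_id x y" using assms(2) True unfolding fixes_out_def by auto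
    then show ?thesis unfolding op_mult_def * by (simp add: op_id_def)
  next
    case False
    then have "y \<notin> S" using xy by auto
    then have *: "\<And>j. V j y = op_id j y" using assms(2) unfolding fixes_out_def by auto
    have "U x y = op_id x y" using assms(1) \<open>y \<notin> S\<close> unfolding fixes_out_def by auto
    then show ?thesis unfolding op_mult_def * by (simp add: op_id_def)
  qed
qed

lemma fixes_out_supp: assumes "fixes_out S (U::('i::finite) op)" "supp_in S v"
  shows "supp_in S (op_apply U v)"
  unfolding supp_in_def
proof (intro allI impI)
  fix x assume "x \<notin> S"
  then have *: "\<And>j. U x j = op_id x j" using assms(1) unfolding fixes_out_def by auto
  have "op_apply U v x = v x" unfolding op_apply_def * by (simp add: op_id_def)
  then show "op_apply U v x = 0" using assms(2) \<open>x \<notin> S\<close> unfolding supp_in_def by auto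
qed

lemma fixes_out_ek: assumes "fixes_out S (U::('i::finite) op)" "k \<notin> S"
  shows "op_apply U (ek k) = ek k"
proof
  fix x
  have "op_apply U (ek k) x = U x k" unfolding op_apply_def ek_def by simp
  also have "\<dots> = op_id x k" using assms unfolding fixes_out_def by auto
  finally show "op_apply U (ek k) x = ek k x" unfolding op_id_def ek_def by simp
qed

lemma op_apply_lin: "op_apply U (\<lambda>x. a x + c * b x) = (\<lambda>x. op_apply U a x + c * op_apply U b x)"
  unfolding op_apply_def by (auto simp: algebra_simps sum.distrib sum_distrib_left intro!: ext)

lemma op_apply_scale: "op_apply U (\<lambda>x. c * b x) = (\<lambda>x. c * op_apply U b x)"
  unfolding op_apply_def by (auto simp: algebra_simps sum_distrib_left intro!: ext)

lemma op_apply_zero: "op_apply U (\<lambda>x. 0) = (\<lambda>x. 0)"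
  unfolding op_apply_def by auto

lemma sumsq_nonneg: "0 \<le> (\<Sum>i\<in>UNIV. (cmod (u i))\<^sup>2)"
  by (rule sum_nonneg) simp

lemma ip_self: "ip u u = complex_of_real ((vnorm u)\<^sup>2)"
proof -
  have "(vnorm u)\<^sup>2 = (\<Sum>i\<in>UNIV. (cmod (u i))\<^sup>2)" unfolding vnorm_def
    using sumsq_nonneg by simp
  also have "complex_of_real \<dots> = (\<Sum>i\<in>UNIV. complex_of_real ((cmod (u i))\<^sup>2))"
    by (rule of_real_sum)
  also have "\<dots> = ip u u" unfolding ip_def complex_norm_square by (rule refl)
  finally show ?thesis by simp
qed

lemma vnorm_nonneg: "vnorm u \<ge> 0" unfolding vnorm_def using sumsq_nonneg by simp

lemma vnorm_zero: assumes "vnorm (u::('i::finite) vec) = 0" shows "u = (\<lambda>x. 0)"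
proof
  fix x
  have "(\<Sum>i\<in>UNIV. (cmod (u i))\<^sup>2) = 0" using assms unfolding vnorm_def by simp
  then have "(cmod (u x))\<^sup>2 = 0" by (simp add: sum_nonneg_eq_0_iff)
  then show "u x = 0" by simp
qed

lemma ip_zero: "ip (u::('i::finite) vec) u = 0 \<Longrightarrow> u = (\<lambda>x. 0)"
  using ip_self[of u] vnorm_zero[of u] by simp

lemma ip_ek_right: "ip u (ek k) = u k"
proof -
  have *: "(\<lambda>x. u x * cnj (ek k x)) = (\<lambda>x. if x = k then u k else 0)" unfolding ek_def by auto
  show ?thesis unfolding ip_def apply (subst *) by simp
qed

lemma ip_ek_left: "ip (ek k) u = cnj (u k)"
proof -
  have *: "(\<lambda>x. ek k x * cnj (u x)) = (\<lambda>x. if x = k then cnj (u k) else 0)" unfolding ek_def by auto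
  show ?thesis unfolding ip_def apply (subst *) by simp
qed

lemma ip_diff_left: "ip (\<lambda>x. a x - b x) w = ip a w - ip b w"
  unfolding ip_def by (simp add: algebra_simps sum_subtractf)

lemma ip_diff_right: "ip w (\<lambda>x. a x - b x) = ip w a - ip w b"
  unfolding ip_def by (simp add: algebra_simps sum_subtractf)

lemma ip_scale_left: "ip (\<lambda>x. c * a x) w = c * ip a w"
  unfolding ip_def by (simp add: algebra_simps sum_distrib_left)

lemma ip_scale_right: "ip w (\<lambda>x. c * a x) = cnj c * ip w a"
  unfolding ip_def by (simp add: algebra_simps sum_distrib_left)

lemma ip_cnj: "cnj (ip u w) = ip w u"
  unfolding ip_def by (simp add: mult.commute)

lemma op_apply_ek: "op_apply M (ek y) x = M x y"
proof -
  have *: "(\<lambda>j. M x j * ek y j) = (\<lambda>j. if j = y then M x y else 0)" unfolding ek_def by auto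
  show ?thesis unfolding op_apply_def apply (subst *) by simp
qed

lemma op_ext: assumes "\<And>y. op_apply M (ek y) = op_apply N (ek y)" shows "M = N"
proof (intro ext)
  fix x y show "M x y = N x y" using assms[of y] op_apply_ek[of M y x] op_apply_ek[of N y x] by metis
qed

definition r1 :: "complex \<Rightarrow> 'i vec \<Rightarrow> 'i op" where
  "r1 c u = (\<lambda>x y. op_id x y - c * u x * cnj (u y))"

lemma op_apply_r1: "op_apply (r1 c u) v = (\<lambda>x. v x - c * u x * ip v u)"
proof
  fix x
  have "op_apply (r1 c u) v x = (\<Sum>y\<in>UNIV. op_id x y * v y - c * u x * (v y * cnj (u y)))"
    unfolding op_apply_def r1_def by (simp add: algebra_simps)
  also have "\<dots> = v x - c * u x * ip v u"
    unfolding sum_subtractf ip_def sum_distrib_left[symmetric] by (simp add: op_id_def)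
  finally show "op_apply (r1 c u) v x = v x - c * u x * ip v u" .
qed

lemma op_adj_r1: "cnj c = c \<Longrightarrow> op_adj (r1 c u) = r1 c u"
  unfolding op_adj_def r1_def op_id_def by (auto intro!: ext)

lemma r1_sq: fixes u :: "('i::finite) vec" assumes "c * c * ip u u = 2 * c"
  shows "op_mult (r1 c u) (r1 c u) = op_id"
proof (rule op_ext)
  fix y
  define v where "v = (ek y :: 'i vec)"
  define w where "w = op_apply (r1 c u) v"
  have w: "w = (\<lambda>x. v x - c * u x * ip v u)" unfolding w_def op_apply_r1 ..
  have wu: "ip w u = ip v u - c * ip v u * ip u u"
    unfolding w ip_diff_left
    using ip_scale_left[of "c * ip v u" u u] by (simp add: mult_ac)
  have "op_apply (r1 c u) w = (\<lambda>x. w x - c * u x * ip w u)" by (rule op_apply_r1)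
  also have "\<dots> = (\<lambda>x. v x - (2 * c - c * c * ip u u) * u x * ip v u)"
    unfolding wu unfolding w by (auto simp: algebra_simps)
  also have "\<dots> = v"
  proof -
    have z: "2 * c - c * c * ip u u = 0" using assms by simp
    show ?thesis unfolding z by simp
  qed
  finally show "op_apply (op_mult (r1 c u) (r1 c u)) (ek y) = op_apply op_id (ek y)"
    unfolding op_apply_mult w_def v_def by simp
qed

definition dg :: "complex \<Rightarrow> 'i \<Rightarrow> 'i op" where
  "dg a k = (\<lambda>x y. if x = y then (if x = k then a else 1) else 0)"

lemma op_apply_dg: "op_apply (dg a k) v = (\<lambda>x. (if x = k then a else 1) * v x)"
proof
  fix x
  have *: "(\<lambda>y. dg a k x y * v y) = (\<lambda>y. if y = x then (if x = k then a else 1) * v x else 0)"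
    unfolding dg_def by auto
  show "op_apply (dg a k) v x = (if x = k then a else 1) * v x"
    unfolding op_apply_def apply (subst *) by simp
qed

lemma op_adj_dg: "op_adj (dg a k) = dg (cnj a) k"
  unfolding op_adj_def dg_def by (auto intro!: ext)

lemma dg_mult: "op_mult (dg a k) (dg b k) = (dg (a * b) k :: ('i::finite) op)"
  by (rule op_ext) (auto simp: op_apply_mult op_apply_dg)

lemma dg_one: "dg 1 k = op_id"
  unfolding dg_def op_id_def by (auto intro!: ext)

lemma dg_unitary: assumes "cnj a * a = 1" shows "unitary_op (dg a k :: ('i::finite) op)"
  unfolding unitary_op_def op_adj_dg dg_mult using assms by (simp add: mult.commute dg_one)

lemma householder:
  fixes p :: "('i::finite) vec"
  assumes supp: "supp_in S p" and kS: "k \<in> S"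
  shows "\<exists>H. unitary_op H \<and> fixes_out S H \<and>
    op_apply H p = (\<lambda>x. complex_of_real (vnorm p) * ek k x)"
proof -
  define \<phi> where "\<phi> = (if p k = 0 then 1 else cnj (p k) / complex_of_real (cmod (p k)))"
  have nsq: "p k * cnj (p k) = complex_of_real (cmod (p k)) * complex_of_real (cmod (p k))"
    using complex_norm_square[of "p k"] by (simp add: power2_eq_square)
  have \<phi>1: "cnj \<phi> * \<phi> = 1"
  proof (cases "p k = 0")
    case True then show ?thesis unfolding \<phi>_def by simp
  next
    case False
    then have "cmod (p k) \<noteq> 0" by simp
    then show ?thesis unfolding \<phi>_def using False nsq
      by (simp add: field_simps)
  qed
  have \<phi>k: "\<phi> * p k = complex_of_real (cmod (p k))"
  proof (cases "p k = 0")
    case True then show ?thesis unfolding \<phi>_def by simp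
  next
    case False
    then have "cmod (p k) \<noteq> 0" by simp
    then show ?thesis unfolding \<phi>_def using False nsq
      by (simp add: field_simps mult.commute)
  qed
  define D where "D = (dg \<phi> k :: 'i op)"
  define p' where "p' = op_apply D p"
  have p'k: "p' k = complex_of_real (cmod (p k))" unfolding p'_def D_def op_apply_dg using \<phi>k by simp
  have p'x: "\<And>x. x \<noteq> k \<Longrightarrow> p' x = p x" unfolding p'_def D_def op_apply_dg by simp
  have Du: "unitary_op D" unfolding D_def using \<phi>1 by (rule dg_unitary)
  have Df: "fixes_out S D" unfolding fixes_out_def D_def dg_def op_id_def using kS by auto
  have ipp': "ip p' p' = ip p p" unfolding p'_def
    using Du unfolding unitary_op_def by (intro ip_apply) auto
  define r where "r = complex_of_real (vnorm p)"
  have rr: "cnj r = r" unfolding r_def by simp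
  have ipp: "ip p p = r * r" unfolding r_def ip_self by (simp add: power2_eq_square)
  define u where "u = (\<lambda>x. p' x - r * ek k x)"
  define n where "n = ip u u"
  define c where "c = 2 / n"
  have nr: "cnj n = n" unfolding n_def ip_cnj ..
  have cr: "cnj c = c" unfolding c_def using nr by simp
  have ccn: "c * c * n = 2 * c"
  proof (cases "n = 0")
    case True then show ?thesis unfolding c_def by simp
  next
    case False then show ?thesis unfolding c_def by (simp add: field_simps)
  qed
  define H2 where "H2 = r1 c u"
  have H2u: "unitary_op H2"
    unfolding unitary_op_def H2_def op_adj_r1[OF cr] using r1_sq[of c u] ccn n_def by simp
  have uS: "\<And>x. x \<notin> S \<Longrightarrow> u x = 0"
  proof -
    fix x assume "x \<notin> S"
    then have "x \<noteq> k" using kS by auto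
    then show "u x = 0" unfolding u_def using p'x[of x] supp \<open>x \<notin> S\<close>
      unfolding supp_in_def ek_def by simp
  qed
  have H2f: "fixes_out S H2" unfolding fixes_out_def H2_def r1_def using uS by auto
  have H2p': "op_apply H2 p' = (\<lambda>x. r * ek k x)"
  proof (cases "u = (\<lambda>x. 0)")
    case True
    then have "\<And>x. p' x = r * ek k x" unfolding u_def by (metis eq_iff_diff_eq_0)
    then show ?thesis unfolding H2_def op_apply_r1 using True by auto
  next
    case False
    then have n0: "n \<noteq> 0" unfolding n_def using ip_zero by blast
    have ip1: "ip p' u = r * r - r * p' k"
      unfolding u_def ip_diff_right ip_scale_right ip_ek_right ipp' ipp rr ..
    have uk: "cnj (u k) = p' k - r" unfolding u_def ek_def using p'k rr by simp
    have "n = ip p' u - r * ip (ek k) u"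
      unfolding n_def using ip_diff_left[of p' "\<lambda>x. r * ek k x" u] ip_scale_left[of r "ek k" u]
      unfolding u_def[symmetric] by simp
    also have "\<dots> = 2 * ip p' u" unfolding ip_ek_left uk using ip1 by (simp add: algebra_simps)
    finally have "c * ip p' u = 1" unfolding c_def using n0 by (simp add: field_simps)
    then have *: "\<And>x. c * u x * ip p' u = u x" by (metis mult.commute mult.left_commute mult_1_right)
    have eq: "\<And>x. p' x - c * u x * ip p' u = r * ek k x" unfolding * unfolding u_def by simp
    show ?thesis unfolding H2_def op_apply_r1 using eq by auto
  qed
  show ?thesis
  proof (intro exI conjI)
    show "unitary_op (op_mult H2 D)" using H2u Du by (rule unitary_mult)
    show "fixes_out S (op_mult H2 D)" using H2f Df by (rule fixes_out_mult)
    show "op_apply (op_mult H2 D) p = (\<lambda>x. complex_of_real (vnorm p) * ek k x)"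
      unfolding op_apply_mult p'_def[symmetric] H2p' r_def ..
  qed
qed

lemma ip_elim_k: "ip (\<lambda>x. a x - a k * ek k x) (\<lambda>x. b x - b k * ek k x) = ip a b - a k * cnj (b k)"
proof -
  have e: "ip (ek k) (\<lambda>x. b x - b k * ek k x) = 0" unfolding ip_ek_left by (simp add: ek_def)
  have "ip (\<lambda>x. a x - a k * ek k x) (\<lambda>x. b x - b k * ek k x)
     = ip a (\<lambda>x. b x - b k * ek k x) - a k * ip (ek k) (\<lambda>x. b x - b k * ek k x)"
    unfolding ip_diff_left ip_scale_left ..
  also have "\<dots> = ip a (\<lambda>x. b x - b k * ek k x)" by (simp only: e) simp
  also have "\<dots> = ip a b - cnj (b k) * a k" unfolding ip_diff_right ip_scale_right ip_ek_right ..
  finally show ?thesis by (simp add: mult.commute)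
qed

lemma U2_gen:
  assumes "finite (I :: 'i set)"
  shows "\<And>S (p :: 'i \<Rightarrow> ('x::finite) vec) q. card I \<le> card S \<Longrightarrow>
     (\<forall>i\<in>I. supp_in S (p i) \<and> supp_in S (q i)) \<Longrightarrow>
     (\<forall>i\<in>I. \<forall>j\<in>I. ip (p i) (p j) = ip (q i) (q j)) \<Longrightarrow>
     \<exists>U. unitary_op U \<and> fixes_out S U \<and> (\<forall>i\<in>I. op_apply U (p i) = q i)"
  using assms
proof (induction I rule: finite_induct)
  case empty
  then show ?case using unitary_id fixes_out_id by blast
next
  case (insert i0 I)
  note IH = insert.IH
  fix S :: "'x set" and p q :: "'i \<Rightarrow> 'x vec"
  assume card: "card (insert i0 I) \<le> card S"
    and supp: "\<forall>i\<in>insert i0 I. supp_in S (p i) \<and> supp_in S (q i)"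
    and gram: "\<forall>i\<in>insert i0 I. \<forall>j\<in>insert i0 I. ip (p i) (p j) = ip (q i) (q j)"
  have cardI: "card (insert i0 I) = card I + 1" using insert.hyps by simp
  show "\<exists>U. unitary_op U \<and> fixes_out S U \<and> (\<forall>i\<in>insert i0 I. op_apply U (p i) = q i)"
  proof (cases "p i0 = (\<lambda>x. 0)")
    case True
    have "ip (p i0) (p i0) = 0" unfolding True ip_def by simp
    then have "ip (q i0) (q i0) = 0" using gram by simp
    then have q0: "q i0 = (\<lambda>x. 0)" by (rule ip_zero)
    obtain U where U: "unitary_op U" "fixes_out S U" "\<forall>i\<in>I. op_apply U (p i) = q i"
      using IH[of S p q] card cardI supp gram by auto
    show ?thesis using U True q0 op_apply_zero[of U] by auto
  next
    case False
    then obtain x0 where "p i0 x0 \<noteq> 0" by auto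
    then have kS: "x0 \<in> S" using supp unfolding supp_in_def by auto
    define k where "k = x0"
    have kS: "k \<in> S" using kS k_def by simp
    obtain Hp where Hp: "unitary_op Hp" "fixes_out S Hp"
      "op_apply Hp (p i0) = (\<lambda>x. complex_of_real (vnorm (p i0)) * ek k x)"
      using householder[of S "p i0" k] supp kS by auto
    obtain Hq where Hq: "unitary_op Hq" "fixes_out S Hq"
      "op_apply Hq (q i0) = (\<lambda>x. complex_of_real (vnorm (q i0)) * ek k x)"
      using householder[of S "q i0" k] supp kS by auto
    have "complex_of_real ((vnorm (p i0))\<^sup>2) = complex_of_real ((vnorm (q i0))\<^sup>2)"
      using gram unfolding ip_self[symmetric] by simp
    then have "(vnorm (p i0))\<^sup>2 = (vnorm (q i0))\<^sup>2" using of_real_eq_iff by blast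
    then have vn: "vnorm (p i0) = vnorm (q i0)" using vnorm_nonneg
      by (metis power2_eq_iff_nonneg)
    define r where "r = complex_of_real (vnorm (p i0))"
    have rr: "cnj r = r" unfolding r_def by simp
    have r0: "r \<noteq> 0" unfolding r_def using False vnorm_zero by auto
    define p' where "p' i = op_apply Hp (p i)" for i
    define q' where "q' i = op_apply Hq (q i)" for i
    have p'0: "p' i0 = (\<lambda>x. r * ek k x)" unfolding p'_def Hp(3) r_def ..
    have q'0: "q' i0 = (\<lambda>x. r * ek k x)" unfolding q'_def Hq(3) r_def vn ..
    have gp: "ip (p' i) (p' j) = ip (p i) (p j)" for i j
      unfolding p'_def using Hp(1) unfolding unitary_op_def by (intro ip_apply) auto
    have gq: "ip (q' i) (q' j) = ip (q i) (q j)" for i j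
      unfolding q'_def using Hq(1) unfolding unitary_op_def by (intro ip_apply) auto
    have gram': "\<forall>i\<in>insert i0 I. \<forall>j\<in>insert i0 I. ip (p' i) (p' j) = ip (q' i) (q' j)"
      using gram gp gq by simp
    have kk: "p' i k = q' i k" if "i \<in> I" for i
    proof -
      have "ip (p' i) (p' i0) = r * p' i k" unfolding p'0 ip_scale_right ip_ek_right rr ..
      moreover have "ip (q' i) (q' i0) = r * q' i k" unfolding q'0 ip_scale_right ip_ek_right rr ..
      ultimately show ?thesis using gram' that r0 by auto
    qed
    define p'' where "p'' i = (\<lambda>x. p' i x - p' i k * ek k x)" for i
    define q'' where "q'' i = (\<lambda>x. q' i x - q' i k * ek k x)" for i
    have supp'': "\<forall>i\<in>I. supp_in (S - {k}) (p'' i) \<and> supp_in (S - {k}) (q'' i)"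
    proof
      fix i assume "i \<in> I"
      then have "supp_in S (p' i)" "supp_in S (q' i)" unfolding p'_def q'_def
        using supp fixes_out_supp Hp(2) Hq(2) by auto
      then show "supp_in (S - {k}) (p'' i) \<and> supp_in (S - {k}) (q'' i)"
        unfolding supp_in_def p''_def q''_def ek_def by auto
    qed
    have gram'': "\<forall>i\<in>I. \<forall>j\<in>I. ip (p'' i) (p'' j) = ip (q'' i) (q'' j)"
      unfolding p''_def q''_def ip_elim_k using gram' kk by auto
    have card'': "card I \<le> card (S - {k})" using card cardI kS by simp
    obtain U' where U': "unitary_op U'" "fixes_out (S - {k}) U'" "\<forall>i\<in>I. op_apply U' (p'' i) = q'' i"
      using IH[OF card'' supp'' gram''] by blast
    have U'k: "op_apply U' (ek k) = ek k" using U'(2) by (rule fixes_out_ek) simp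
    define U where "U = op_mult (op_adj Hq) (op_mult U' Hp)"
    have Uu: "unitary_op U" unfolding U_def
      using Hq(1) Hp(1) U'(1) by (intro unitary_mult unitary_adj)
    have Uf: "fixes_out S U" unfolding U_def
      using Hq(2) Hp(2) fixes_out_mono[OF U'(2), of S]
      by (intro fixes_out_mult fixes_out_adj) auto
    have qback: "op_apply (op_adj Hq) (q' i) = q i" for i
      unfolding q'_def using Hq(1) by (rule apply_adj_apply)
    have "op_apply U (p i) = q i" if "i \<in> insert i0 I" for i
    proof (cases "i = i0")
      case True
      have "op_apply U (p i) = op_apply (op_adj Hq) (op_apply U' (\<lambda>x. r * ek k x))"
        unfolding U_def op_apply_mult True p'_def[symmetric] p'0 ..
      also have "\<dots> = op_apply (op_adj Hq) (q' i0)" unfolding op_apply_scale U'k q'0 ..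
      finally show ?thesis using qback True by simp
    next
      case False
      then have iI: "i \<in> I" using that by auto
      have pe: "p' i = (\<lambda>x. p'' i x + p' i k * ek k x)" unfolding p''_def by simp
      have qe: "q' i = (\<lambda>x. q'' i x + q' i k * ek k x)" unfolding q''_def by simp
      have "op_apply U (p i) = op_apply (op_adj Hq) (op_apply U' (p' i))"
        unfolding U_def op_apply_mult p'_def ..
      also have "op_apply U' (p' i) = q' i"
      proof -
        have "op_apply U' (p' i) = op_apply U' (\<lambda>x. p'' i x + p' i k * ek k x)"
          by (subst pe) (rule refl)
        also have "\<dots> = (\<lambda>x. q'' i x + q' i k * ek k x)"
          unfolding op_apply_lin U'k using U'(3) iI kk[OF iI] by simp
        also have "\<dots> = q' i" using qe by simp
        finally show ?thesis .
      qed
      finally show ?thesis using qback by simp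
    qed
    then show ?thesis using Uu Uf by blast
  qed
qed

lemma gram_unitary:
  fixes p q :: "'i::finite \<Rightarrow> ('x::finite) vec"
  assumes "card (UNIV :: 'i set) \<le> card (UNIV :: 'x set)"
    and "\<And>i j. ip (p i) (p j) = ip (q i) (q j)"
  shows "\<exists>U. unitary_op U \<and> (\<forall>i. op_apply U (p i) = q i)"
  using U2_gen[of "UNIV :: 'i set" UNIV p q] assms unfolding supp_in_def by auto

lemma ip_add_left: "ip (\<lambda>x. a x + b x) w = ip a w + ip b w"
  unfolding ip_def by (simp add: algebra_simps sum.distrib)

lemma ip_add_right: "ip w (\<lambda>x. a x + b x) = ip w a + ip w b"
  unfolding ip_def by (simp add: algebra_simps sum.distrib)

lemma ip_two: "ip (\<lambda>x. a x + \<alpha> * ek k x) (\<lambda>x. b x + \<beta> * ek k x)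
   = ip a b + cnj \<beta> * a k + \<alpha> * cnj (b k) + \<alpha> * cnj \<beta>"
proof -
  have e: "ip (ek k) (ek k) = 1" unfolding ip_ek_right by (simp add: ek_def)
  show ?thesis
    unfolding ip_add_left ip_add_right ip_scale_left ip_scale_right ip_ek_left ip_ek_right e
    by (simp add: algebra_simps ek_def)
qed

definition qf :: "('i::finite) op \<Rightarrow> 'i vec \<Rightarrow> complex" where
  "qf M v = ip (op_apply M v) v"

definition psd_on :: "'i set \<Rightarrow> ('i::finite) op \<Rightarrow> bool" where
  "psd_on I M \<longleftrightarrow> (\<forall>v. supp_in I v \<longrightarrow> Im (qf M v) = 0 \<and> Re (qf M v) \<ge> 0)"

lemma psd_psd_on: "psd M \<Longrightarrow> psd_on UNIV M"
  unfolding psd_def psd_on_def qf_def ip_def Let_def by (simp add: mult.commute)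

lemma psd_on_mono: "psd_on I M \<Longrightarrow> J \<subseteq> I \<Longrightarrow> psd_on J M"
  unfolding psd_on_def supp_in_def by blast

lemma qf_two: "qf M (\<lambda>x. \<alpha> * ek i x + \<beta> * ek j x) =
   cnj \<alpha> * (\<alpha> * M i i + \<beta> * M i j) + cnj \<beta> * (\<alpha> * M j i + \<beta> * M j j)"
proof -
  have a: "op_apply M (\<lambda>x. \<alpha> * ek i x + \<beta> * ek j x) = (\<lambda>x. \<alpha> * M x i + \<beta> * M x j)"
    using op_apply_lin[of M "\<lambda>x. \<alpha> * ek i x" \<beta> "ek j"] unfolding op_apply_scale
    by (simp add: op_apply_ek)
  show ?thesis unfolding qf_def a ip_add_left ip_add_right ip_scale_left ip_scale_right
    by (simp add: algebra_simps ip_ek_right)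
qed

lemma supp_two: "i \<in> I \<Longrightarrow> j \<in> I \<Longrightarrow> supp_in I (\<lambda>x. \<alpha> * ek i x + \<beta> * ek j x)"
  unfolding supp_in_def ek_def by auto

lemma psd_on_two: assumes "psd_on I M" "i \<in> I" "j \<in> I"
  shows "Im (cnj \<alpha> * (\<alpha> * M i i + \<beta> * M i j) + cnj \<beta> * (\<alpha> * M j i + \<beta> * M j j)) = 0"
    "Re (cnj \<alpha> * (\<alpha> * M i i + \<beta> * M i j) + cnj \<beta> * (\<alpha> * M j i + \<beta> * M j j)) \<ge> 0"
  using assms supp_two[OF assms(2,3), of \<alpha> \<beta>] unfolding psd_on_def qf_two[symmetric] by auto

lemma psd_on_diag: assumes "psd_on I M" "i \<in> I"
  shows "Im (M i i) = 0" "Re (M i i) \<ge> 0"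
  using psd_on_two[OF assms assms(2), of 1 0] by auto

lemma psd_on_herm: assumes "psd_on I M" "i \<in> I" "j \<in> I"
  shows "M j i = cnj (M i j)"
proof -
  have 1: "Im (M i i + M i j + M j i + M j j) = 0"
    using psd_on_two(1)[OF assms, of 1 1] by simp
  have 2: "Im (M i i + \<i> * M i j - \<i> * M j i + M j j) = 0"
    using psd_on_two(1)[OF assms, of 1 \<i>] by (simp add: algebra_simps)
  have "Im (M i i) = 0" "Im (M j j) = 0" using psd_on_diag assms by auto
  then show ?thesis using 1 2 by (intro complex_eqI) auto
qed

lemma psd_on_zero_row: assumes "psd_on I M" "i \<in> I" "j \<in> I" "M i i = 0"
  shows "M i j = 0"
proof (rule ccontr)
  assume ne: "M i j \<noteq> 0"
  define m where "m = (cmod (M i j))\<^sup>2"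
  have m0: "m > 0" unfolding m_def using ne by simp
  define s where "s = (Re (M j j) + 1) / (2 * m)"
  define t where "t = - complex_of_real s * M i j"
  have h: "M j i = cnj (M i j)" using psd_on_herm assms by blast
  have mm: "M i j * cnj (M i j) = complex_of_real m" unfolding m_def complex_norm_square ..
  have "cnj t * (t * M i i + 1 * M i j) + cnj 1 * (t * M j i + 1 * M j j)
      = M j j - 2 * complex_of_real s * (M i j * cnj (M i j))"
    unfolding t_def h assms(4) by (simp add: algebra_simps)
  also have "\<dots> = M j j - complex_of_real (2 * s * m)" unfolding mm by simp
  finally have eq: "cnj t * (t * M i i + 1 * M i j) + cnj 1 * (t * M j i + 1 * M j j) = M j j - complex_of_real (2 * s * m)" .
  have "Re (M j j) - 2 * s * m \<ge> 0" using psd_on_two(2)[OF assms(1,2,3), of t 1] unfolding eq by simp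
  moreover have "2 * s * m = Re (M j j) + 1" unfolding s_def using m0 by simp
  ultimately show False by simp
qed

lemma schur_psd:
  fixes M :: "('i::finite) op"
  assumes psd: "psd_on (insert i0 I) M" and i0: "i0 \<notin> I" and d0: "M i0 i0 \<noteq> 0"
  shows "psd_on I (\<lambda>i j. M i j - M i i0 / M i0 i0 * M i0 j)"
  unfolding psd_on_def
proof (intro allI impI)
  fix v :: "'i vec" assume sv: "supp_in I v"
  define M' where "M' = (\<lambda>i j. M i j - M i i0 / M i0 i0 * M i0 j)"
  define d where "d = M i0 i0"
  define s where "s = op_apply M v i0"
  define m where "m = (\<lambda>x. M x i0)"
  define t where "t = - s / d"
  define w where "w = (\<lambda>x. v x + t * ek i0 x)"
  have sw: "supp_in (insert i0 I) w" using sv unfolding supp_in_def w_def ek_def by auto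
  have dr: "cnj d = d" using psd_on_diag(1)[OF psd, of i0] unfolding d_def
    by (simp add: complex_eq_iff)
  have d0': "d \<noteq> 0" using d0 d_def by simp
  have aM': "op_apply M' v = (\<lambda>x. op_apply M v x - (s / d) * m x)"
  proof
    fix x
    have "op_apply M' v x = (\<Sum>j\<in>UNIV. M x j * v j - M x i0 / d * (M i0 j * v j))"
      unfolding op_apply_def M'_def d_def by (simp add: algebra_simps)
    also have "\<dots> = op_apply M v x - M x i0 / d * s"
      unfolding sum_subtractf sum_distrib_left[symmetric] s_def op_apply_def ..
    finally show "op_apply M' v x = op_apply M v x - (s / d) * m x" unfolding m_def by simp
  qed
  have aMw: "op_apply M w = (\<lambda>x. op_apply M v x + t * m x)"
    unfolding w_def op_apply_lin m_def op_apply_ek ..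
  have ivm: "ip v m = s"
  proof -
    have "\<And>x. v x * cnj (m x) = M i0 x * v x"
    proof -
      fix x show "v x * cnj (m x) = M i0 x * v x"
      proof (cases "x \<in> I")
        case True
        then have "M i0 x = cnj (M x i0)" using psd_on_herm[OF psd, of x i0] by simp
        then show ?thesis unfolding m_def by simp
      next
        case False
        then show ?thesis using sv unfolding supp_in_def by simp
      qed
    qed
    then show ?thesis unfolding ip_def s_def op_apply_def by (intro sum.cong) auto
  qed
  have imv: "ip m v = cnj s" using ip_cnj[of v m] ivm by simp
  have q1: "qf M' v = qf M v - (s / d) * cnj s"
    unfolding qf_def aM' ip_diff_left ip_scale_left imv ..
  have "qf M w = qf M v + cnj t * s + t * cnj s + t * cnj t * d"
    unfolding qf_def aMw unfolding w_def ip_add_left ip_add_right ip_scale_left ip_scale_right ip_ek_right imv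
    unfolding s_def m_def d_def by (simp add: algebra_simps)
  also have "\<dots> = qf M v - (s / d) * cnj s"
    unfolding t_def using d0' dr by (simp add: field_simps)
  finally have "qf M' v = qf M w" using q1 by simp
  then show "Im (qf (\<lambda>i j. M i j - M i i0 / M i0 i0 * M i0 j) v) = 0 \<and>
        0 \<le> Re (qf (\<lambda>i j. M i j - M i i0 / M i0 i0 * M i0 j) v)"
    using psd sw unfolding psd_on_def M'_def by auto
qed

lemma purify_gen:
  assumes "finite (I :: ('i::finite) set)"
  shows "\<And>(S :: ('c::finite) set) M. card I \<le> card S \<Longrightarrow> psd_on I M \<Longrightarrow>
     \<exists>p :: 'i \<Rightarrow> 'c vec. (\<forall>i\<in>I. supp_in S (p i)) \<and> (\<forall>i\<in>I. \<forall>j\<in>I. M i j = ip (p i) (p j))"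
  using assms
proof (induction I rule: finite_induct)
  case empty
  then show ?case by auto
next
  case (insert i0 I)
  note IH = insert.IH
  fix S :: "'c set" and M :: "'i op"
  assume card: "card (insert i0 I) \<le> card S" and psd: "psd_on (insert i0 I) M"
  have cardI: "card (insert i0 I) = card I + 1" using insert.hyps by simp
  have psdI: "psd_on I M" using psd psd_on_mono by blast
  show "\<exists>p :: 'i \<Rightarrow> 'c vec. (\<forall>i\<in>insert i0 I. supp_in S (p i)) \<and>
     (\<forall>i\<in>insert i0 I. \<forall>j\<in>insert i0 I. M i j = ip (p i) (p j))"
  proof (cases "M i0 i0 = 0")
    case True
    have row: "M i0 j = 0" if "j \<in> insert i0 I" for j
      using psd_on_zero_row[OF psd _ that True] by simp
    have col: "M j i0 = 0" if "j \<in> insert i0 I" for j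
      using psd_on_herm[OF psd _ that, of i0] row[OF that] by simp
    obtain p where p: "\<forall>i\<in>I. supp_in S (p i)" "\<forall>i\<in>I. \<forall>j\<in>I. M i j = ip (p i) (p j)"
      using IH[of S M] card cardI psdI by auto
    define P where "P = p(i0 := (\<lambda>x. 0))"
    have z1: "ip (\<lambda>x. 0) u = 0" for u :: "'c vec" unfolding ip_def by simp
    have z2: "ip u (\<lambda>x. 0) = 0" for u :: "'c vec" unfolding ip_def by simp
    have "(\<forall>i\<in>insert i0 I. supp_in S (P i))" using p(1) unfolding P_def supp_in_def by auto
    moreover have "\<forall>i\<in>insert i0 I. \<forall>j\<in>insert i0 I. M i j = ip (P i) (P j)"
      using p(2) row col insert.hyps(2) unfolding P_def by (auto simp: z1 z2)
    ultimately show ?thesis by blast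
  next
    case False
    define d where "d = M i0 i0"
    have dI: "Im d = 0" "Re d \<ge> 0" using psd_on_diag[OF psd] unfolding d_def by auto
    define r where "r = complex_of_real (sqrt (Re d))"
    have rr: "cnj r = r" unfolding r_def by simp
    have r2: "r * r = d" unfolding r_def using dI
      by (simp add: complex_eq_iff flip: of_real_mult)
    have r0: "r \<noteq> 0" using r2 False d_def by auto
    have "S \<noteq> {}" using card cardI by auto
    then obtain k where kS: "k \<in> S" by auto
    define M' where "M' = (\<lambda>i j. M i j - M i i0 / M i0 i0 * M i0 j)"
    have psd': "psd_on I M'" unfolding M'_def using schur_psd[OF psd insert.hyps(2) False] .
    have card': "card I \<le> card (S - {k})" using card cardI kS by simp
    obtain p where p: "\<forall>i\<in>I. supp_in (S - {k}) (p i)" "\<forall>i\<in>I. \<forall>j\<in>I. M' i j = ip (p i) (p j)"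
      using IH[OF card' psd'] by blast
    have pk: "p i k = 0" if "i \<in> I" for i using p(1) that unfolding supp_in_def by auto
    define c where "c i = M i i0 / r" for i
    define P where "P i = (if i = i0 then (\<lambda>x. 0 + r * ek k x) else (\<lambda>x. p i x + c i * ek k x))" for i
    have herm: "M i0 j = cnj (M j i0)" if "j \<in> insert i0 I" for j
      using psd_on_herm[OF psd that, of i0] by simp
    have z: "ip (\<lambda>x. 0) u = 0" "ip u (\<lambda>x. 0) = 0" for u :: "'c vec" unfolding ip_def by simp_all
    have "(\<forall>i\<in>insert i0 I. supp_in S (P i))" using p(1) kS unfolding P_def supp_in_def ek_def by auto
    moreover have "M i j = ip (P i) (P j)" if i: "i \<in> insert i0 I" and j: "j \<in> insert i0 I" for i j
    proof (cases "i = i0")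
      case True
      note ii = True
      show ?thesis
      proof (cases "j = i0")
        case True
        have P0: "P i0 = (\<lambda>x. r * ek k x)" unfolding P_def by simp
        have e: "ek k k = 1" unfolding ek_def by simp
        have "ip (P i0) (P i0) = r * r"
          unfolding P0 ip_scale_left ip_scale_right ip_ek_right rr e by simp
        then show ?thesis using ii True r2 d_def by simp
      next
        case False
        then have jI: "j \<in> I" using j by auto
        have "ip (P i) (P j) = r * cnj (c j)" unfolding P_def using ii False
          ip_two[of "\<lambda>x. 0" r k "p j" "c j"] by (simp add: z pk[OF jI] rr)
        also have "\<dots> = M i0 j" unfolding c_def using herm[OF j] rr r0 by simp
        finally show ?thesis using ii by simp
      qed
    next
      case False
      then have iI: "i \<in> I" using i by auto
      show ?thesis
      proof (cases "j = i0")
        case True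
        have "ip (P i) (P j) = c i * r" unfolding P_def using True False
          ip_two[of "p i" "c i" k "\<lambda>x. 0" r] by (simp add: z pk[OF iI] rr)
        also have "\<dots> = M i i0" unfolding c_def using r0 by simp
        finally show ?thesis using True by simp
      next
        case ji: False
        then have jI: "j \<in> I" using j by auto
        have "ip (P i) (P j) = M' i j + c i * cnj (c j)" unfolding P_def using ji False p(2) iI jI
          by (simp add: ip_two pk[OF iI] pk[OF jI])
        also have "\<dots> = M i j" unfolding M'_def c_def
          using herm[OF j] rr r0 r2 d_def by (simp add: field_simps)
        finally show ?thesis by simp
      qed
    qed
    ultimately show ?thesis by blast
  qed
qed

lemma purify:
  fixes M :: "('i::finite) op"
  assumes "psd M" "card (UNIV :: 'i set) \<le> card (UNIV :: ('c::finite) set)"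
  shows "\<exists>p :: 'i \<Rightarrow> 'c vec. \<forall>i j. M i j = ip (p i) (p j)"
  using purify_gen[of "UNIV :: 'i set" "UNIV :: 'c set" M] assms psd_psd_on by auto

definition row :: "('a \<times> 'b \<times> 'c) vec \<Rightarrow> 'a \<Rightarrow> ('b \<times> 'c) vec" where
  "row v a = (\<lambda>bc. v (a, bc))"

definition col3 :: "('a \<times> 'b \<times> 'c) vec \<Rightarrow> ('a \<times> 'b) \<Rightarrow> 'c vec" where
  "col3 v i = (\<lambda>c. v (fst i, snd i, c))"

definition pC :: "('a::finite \<times> 'b::finite \<times> 'c::finite) vec \<Rightarrow> ('a \<times> 'b) op" where
  "pC v = (\<lambda>i j. ip (col3 v i) (col3 v j))"

lemma L1: "ptrace_BC (ketbra v) a a' = ip (row v a) (row v a')"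
  unfolding ptrace_BC_def ketbra_def ip_def row_def ..

lemma L2: "row (apply_BC U v) a = op_apply U (row v a)"
  unfolding row_def apply_BC_def op_apply_def by (auto simp: case_prod_beta)

lemma L3: "unitary_op U \<Longrightarrow> ptrace_BC (ketbra (apply_BC U v)) = ptrace_BC (ketbra v)"
  by (intro ext) (simp add: L1 L2 ip_apply unitary_op_def)

lemma L4: "ptrace_BC (ketbra v) = ptrace_B (pC v)"
  unfolding ptrace_BC_def ptrace_B_def ketbra_def pC_def ip_def col3_def
  by (intro ext) (simp add: sum_pair)

lemma L5: "pC (apply_AB L v) = op_mult (op_mult L (pC v)) (op_adj L)"
proof (intro ext)
  fix i j :: "'a \<times> 'b"
  have a: "apply_AB L v (fst i, snd i, c) = (\<Sum>k\<in>UNIV. L i k * v (fst k, snd k, c))" for i c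
    unfolding apply_AB_def by (simp add: case_prod_beta)
  have "pC (apply_AB L v) i j = (\<Sum>c\<in>UNIV. (\<Sum>k\<in>UNIV. L i k * v (fst k, snd k, c)) *
          cnj (\<Sum>l\<in>UNIV. L j l * v (fst l, snd l, c)))"
    unfolding pC_def ip_def col3_def a ..
  also have "\<dots> = (\<Sum>c\<in>UNIV. \<Sum>k\<in>UNIV. \<Sum>l\<in>UNIV. L i k * v (fst k, snd k, c) *
          cnj (L j l * v (fst l, snd l, c)))"
    unfolding cnj_sum sum_product ..
  also have "\<dots> = (\<Sum>k\<in>UNIV. \<Sum>l\<in>UNIV. \<Sum>c\<in>UNIV. L i k * v (fst k, snd k, c) *
          cnj (L j l * v (fst l, snd l, c)))"
    by (rule swap3)
  also have "\<dots> = (\<Sum>k\<in>UNIV. \<Sum>l\<in>UNIV. L i k * pC v k l * cnj (L j l))"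
    unfolding pC_def ip_def col3_def by (simp add: sum_distrib_left sum_distrib_right mult_ac)
  also have "\<dots> = op_mult (op_mult L (pC v)) (op_adj L) i j"
    unfolding op_mult_def op_adj_def sum_distrib_right
    apply (subst sum.swap) by (rule refl)
  finally show "pC (apply_AB L v) i j = op_mult (op_mult L (pC v)) (op_adj L) i j" .
qed

lemma L6: "ptrace_BC (ketbra (apply_AB L v)) = ptrace_B (op_mult (op_mult L (pC v)) (op_adj L))"
  unfolding L4 L5 ..

lemma L7: "psd (pC v)"
  unfolding psd_def Let_def
proof (intro allI)
  fix x :: "'a \<times> 'b \<Rightarrow> complex"
  define y where "y c = (\<Sum>i\<in>UNIV. cnj (x i) * col3 v i c)" for c
  have "(\<Sum>i\<in>UNIV. cnj (x i) * op_apply (pC v) x i)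
      = (\<Sum>i\<in>UNIV. \<Sum>j\<in>UNIV. \<Sum>c\<in>UNIV. cnj (x i) * col3 v i c * cnj (cnj (x j) * col3 v j c))"
    unfolding op_apply_def pC_def ip_def by (simp add: sum_distrib_left sum_distrib_right mult_ac)
  also have "\<dots> = (\<Sum>c\<in>UNIV. \<Sum>i\<in>UNIV. \<Sum>j\<in>UNIV. cnj (x i) * col3 v i c * cnj (cnj (x j) * col3 v j c))"
    by (rule swap3[symmetric])
  also have "\<dots> = ip y y" unfolding ip_def y_def cnj_sum sum_product ..
  finally have q: "(\<Sum>i\<in>UNIV. cnj (x i) * op_apply (pC v) x i) = complex_of_real ((vnorm y)\<^sup>2)"
    unfolding ip_self .
  show "Im (\<Sum>i\<in>UNIV. cnj (x i) * op_apply (pC v) x i) = 0 \<and> 0 \<le> Re (\<Sum>i\<in>UNIV. cnj (x i) * op_apply (pC v) x i)"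
    unfolding q by simp
qed

lemma rows_unitary:
  fixes x y :: "('a::finite \<times> 'b::finite \<times> 'c::finite) vec"
  assumes "card (UNIV :: 'a set) \<le> card (UNIV :: ('b \<times> 'c) set)"
    and "ptrace_BC (ketbra x) = ptrace_BC (ketbra y)"
  shows "\<exists>U. unitary_op U \<and> apply_BC U x = y"
proof -
  have "\<And>a a'. ip (row x a) (row x a') = ip (row y a) (row y a')"
    using assms(2) unfolding L1[symmetric] by simp
  then obtain U where U: "unitary_op U" "\<And>a. op_apply U (row x a) = row y a"
    using gram_unitary[OF assms(1), of "row x" "row y"] by blast
  have "apply_BC U x = y"
  proof
    fix abc :: "'a \<times> 'b \<times> 'c"
    obtain a bc where abc: "abc = (a, bc)" by (cases abc)
    have "apply_BC U x (a, bc) = row (apply_BC U x) a bc" unfolding row_def ..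
    also have "\<dots> = y (a, bc)" unfolding L2 U(2) by (simp add: row_def)
    finally show "apply_BC U x abc = y abc" unfolding abc .
  qed
  then show ?thesis using U(1) by blast
qed

lemma card_UNIV_prod: "card (UNIV :: ('x \<times> 'y) set) = card (UNIV :: 'x set) * card (UNIV :: 'y set)"
  by (metis UNIV_Times_UNIV card_cartesian_product)

theorem proposition1:
  fixes L :: "('a::finite \<times> 'b::finite) op"
    and \<xi> \<tau> :: "('a \<times> 'b \<times> 'c::finite) vec"
    and T :: nat
  assumes "card (UNIV :: 'c set) \<ge> card (UNIV :: 'a set) * card (UNIV :: 'b set)"
    and "subunitary L"
    and "\<xi> \<noteq> (\<lambda>_. 0)"
    and "T \<ge> 1"
  shows "transformable L T \<xi> \<tau> \<longleftrightarrow>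
    (\<exists>\<pi> :: nat \<Rightarrow> ('a \<times> 'b) op.
       (\<forall>j<T. psd (\<pi> j)) \<and>
       (\<forall>j. j + 2 \<le> T \<longrightarrow>
          ptrace_B (\<pi> (Suc j)) = ptrace_B (op_mult (op_mult L (\<pi> j)) (op_adj L))) \<and>
       ptrace_BC (ketbra \<xi>) = ptrace_B (\<pi> 0) \<and>
       ptrace_BC (ketbra \<tau>) = ptrace_B (op_mult (op_mult L (\<pi> (T - 1))) (op_adj L)))"
proof
  assume "transformable L T \<xi> \<tau>"
  then obtain Us where Us: "\<forall>j\<le>T. unitary_op (Us j)" "run_alg L Us T \<xi> = \<tau>"
    unfolding transformable_def by blast
  define V where "V k = run_alg L Us k \<xi>" for k
  define \<pi> where "\<pi> j = pC (V j)" for j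
  have VS: "V (Suc j) = apply_BC (Us (Suc j)) (apply_AB L (V j))" for j
    unfolding V_def by simp
  have T': "T = Suc (T - 1)" using assms(4) by simp
  show "\<exists>\<pi> :: nat \<Rightarrow> ('a \<times> 'b) op.
       (\<forall>j<T. psd (\<pi> j)) \<and>
       (\<forall>j. j + 2 \<le> T \<longrightarrow>
          ptrace_B (\<pi> (Suc j)) = ptrace_B (op_mult (op_mult L (\<pi> j)) (op_adj L))) \<and>
       ptrace_BC (ketbra \<xi>) = ptrace_B (\<pi> 0) \<and>
       ptrace_BC (ketbra \<tau>) = ptrace_B (op_mult (op_mult L (\<pi> (T - 1))) (op_adj L))"
  proof (intro exI conjI allI impI)
    show "psd (\<pi> j)" for j unfolding \<pi>_def by (rule L7)
    fix j assume j: "j + 2 \<le> T"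
    then have uS: "unitary_op (Us (Suc j))" using Us(1) by simp
    show "ptrace_B (\<pi> (Suc j)) = ptrace_B (op_mult (op_mult L (\<pi> j)) (op_adj L))"
      unfolding \<pi>_def L4[symmetric] VS L3[OF uS] L6 ..
  next
    have u0: "unitary_op (Us 0)" using Us(1) by simp
    show "ptrace_BC (ketbra \<xi>) = ptrace_B (\<pi> 0)"
      unfolding \<pi>_def L4[symmetric] V_def run_alg.simps L3[OF u0] ..
  next
    have "unitary_op (Us T)" using Us(1) by simp
    then have "ptrace_BC (ketbra \<tau>) = ptrace_BC (ketbra (apply_AB L (V (T - 1))))"
      using VS[of "T - 1"] T' L3 Us(2) unfolding V_def by metis
    then show "ptrace_BC (ketbra \<tau>) = ptrace_B (op_mult (op_mult L (\<pi> (T - 1))) (op_adj L))"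
      unfolding \<pi>_def L6 .
  qed
next
  assume "\<exists>\<pi> :: nat \<Rightarrow> ('a \<times> 'b) op.
       (\<forall>j<T. psd (\<pi> j)) \<and>
       (\<forall>j. j + 2 \<le> T \<longrightarrow>
          ptrace_B (\<pi> (Suc j)) = ptrace_B (op_mult (op_mult L (\<pi> j)) (op_adj L))) \<and>
       ptrace_BC (ketbra \<xi>) = ptrace_B (\<pi> 0) \<and>
       ptrace_BC (ketbra \<tau>) = ptrace_B (op_mult (op_mult L (\<pi> (T - 1))) (op_adj L))"
  then obtain \<pi> :: "nat \<Rightarrow> ('a \<times> 'b) op" where
    psd: "\<forall>j<T. psd (\<pi> j)" and
    step: "\<forall>j. j + 2 \<le> T \<longrightarrow>
          ptrace_B (\<pi> (Suc j)) = ptrace_B (op_mult (op_mult L (\<pi> j)) (op_adj L))" and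
    init: "ptrace_BC (ketbra \<xi>) = ptrace_B (\<pi> 0)" and
    fin: "ptrace_BC (ketbra \<tau>) = ptrace_B (op_mult (op_mult L (\<pi> (T - 1))) (op_adj L))"
    by blast
  have cardAB: "card (UNIV :: ('a \<times> 'b) set) \<le> card (UNIV :: 'c set)"
    using assms(1) by (simp add: card_UNIV_prod)
  have cb: "card (UNIV :: 'b set) \<ge> 1" using finite_UNIV_card_ge_0[where 'a='b] by simp
  have cc: "card (UNIV :: 'c set) \<ge> 1" using finite_UNIV_card_ge_0[where 'a='c] by simp
  have "card (UNIV :: 'a set) \<le> card (UNIV :: 'a set) * card (UNIV :: 'b set)"
    using cb by simp
  also have "\<dots> \<le> card (UNIV :: 'c set)" using assms(1) .
  also have "\<dots> \<le> card (UNIV :: 'b set) * card (UNIV :: 'c set)" using cb by simp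
  finally have cardA: "card (UNIV :: 'a set) \<le> card (UNIV :: ('b \<times> 'c) set)"
    by (simp add: card_UNIV_prod)
  have "\<forall>j. \<exists>w :: ('a \<times> 'b \<times> 'c) vec. j < T \<longrightarrow> pC w = \<pi> j"
  proof
    fix j show "\<exists>w :: ('a \<times> 'b \<times> 'c) vec. j < T \<longrightarrow> pC w = \<pi> j"
    proof (cases "j < T")
      case True
      then obtain p :: "'a \<times> 'b \<Rightarrow> 'c vec" where p: "\<forall>i i'. \<pi> j i i' = ip (p i) (p i')"
        using purify[OF _ cardAB, of "\<pi> j"] psd by blast
      define w where "w = (\<lambda>(a, b, c). p (a, b) c)"
      have "col3 w i = p i" for i unfolding col3_def w_def by simp
      then have "pC w = \<pi> j" unfolding pC_def using p by (auto intro!: ext)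
      then show ?thesis by blast
    qed simp
  qed
  then obtain W :: "nat \<Rightarrow> ('a \<times> 'b \<times> 'c) vec" where W: "\<And>j. j < T \<Longrightarrow> pC (W j) = \<pi> j"
    by metis
  define src where "src j = (if j = 0 then \<xi> else apply_AB L (W (j - 1)))" for j
  define tgt where "tgt j = (if j < T then W j else \<tau>)" for j
  have "\<forall>j. \<exists>U. j \<le> T \<longrightarrow> unitary_op U \<and> apply_BC U (src j) = tgt j"
  proof
    fix j
    show "\<exists>U. j \<le> T \<longrightarrow> unitary_op U \<and> apply_BC U (src j) = tgt j"
    proof (cases "j \<le> T")
      case jT: True
      have "ptrace_BC (ketbra (src j)) = ptrace_BC (ketbra (tgt j))"
      proof (cases "j = 0")
        case True
        have "ptrace_BC (ketbra (W 0)) = ptrace_B (\<pi> 0)" using L4[of "W 0"] W[of 0] assms(4) by simp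
        then show ?thesis unfolding src_def tgt_def using True assms(4) init by simp
      next
        case False
        then have j1: "j - 1 < T" using jT by simp
        have s: "ptrace_BC (ketbra (src j)) = ptrace_B (op_mult (op_mult L (\<pi> (j - 1))) (op_adj L))"
          unfolding src_def using False L6[of L "W (j - 1)"] W[OF j1] by simp
        show ?thesis
        proof (cases "j < T")
          case True
          have "(j - 1) + 2 \<le> T" using True False by simp
          then have "ptrace_B (\<pi> j) = ptrace_B (op_mult (op_mult L (\<pi> (j - 1))) (op_adj L))"
            using step False by (metis Suc_pred' not_gr_zero)
          moreover have "ptrace_BC (ketbra (W j)) = ptrace_B (\<pi> j)" using L4[of "W j"] W[OF True] by simp
          ultimately show ?thesis unfolding s tgt_def using True by simp
        next
          case nt: False
          then have "j = T" using jT by simp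
          then show ?thesis unfolding s tgt_def using fin by simp
        qed
      qed
      then show ?thesis using rows_unitary[OF cardA] by blast
    qed simp
  qed
  then obtain Us where Us: "\<And>j. j \<le> T \<Longrightarrow> unitary_op (Us j) \<and> apply_BC (Us j) (src j) = tgt j"
    by metis
  have run: "k < T \<Longrightarrow> run_alg L Us k \<xi> = W k" for k
  proof (induction k)
    case 0
    then show ?case using Us[of 0] unfolding src_def tgt_def by simp
  next
    case (Suc k)
    then have "run_alg L Us k \<xi> = W k" by simp
    then show ?case using Us[of "Suc k"] Suc.prems unfolding src_def tgt_def by simp
  qed
  have T': "T = Suc (T - 1)" using assms(4) by simp
  have "run_alg L Us T \<xi> = apply_BC (Us T) (apply_AB L (run_alg L Us (T - 1) \<xi>))"
    using run_alg.simps(2)[of L Us "T - 1" \<xi>] T' by simp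
  also have "\<dots> = apply_BC (Us T) (src T)" unfolding src_def using run[of "T - 1"] assms(4) by simp
  also have "\<dots> = \<tau>" using Us[of T] unfolding tgt_def by simp
  finally have "run_alg L Us T \<xi> = \<tau>" .
  then show "transformable L T \<xi> \<tau>" unfolding transformable_def using Us by blast
qed


end
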